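(* Let $G$ be a graph on $n$ vertices and let $SV=(v_1,\dots,v_n)$ be a permutation of $V(G)$. Then there exist sets $VC_1,\dots,VC_{n-1}$ such that each $VC_i$ is a minimum-cardinality vertex cover of $G_i$ ($1\le i<n$) and, for each $1 \leq i < n-1$, $VC_i \cap (V(G)\setminus V_{i+1}) \subseteq VC_{i+1}$.
   Context: For $1\le i\le n$, $V_i=\{v_1,\dots,v_i\}$, and $G_i$ is the graph with vertex set $V(G)$ whose edges are exactly the edges of $G$ having one end in $V_i$ and the other in $V(G)\setminus V_i$. A vertex cover of a graph is a set of vertices incident to all its edges. *)

theory Defs
  imports Main
begin

definition simple_graph :: "'a set \<Rightarrow> 'a set set \<Rightarrow> bool" where
  "simple_graph V E \<longleftrightarrow> finite V \<and> (\<forall>e\<in>E. e \<subseteq> V \<and> card e = 2)"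

(* V_i = {v_1, ..., v_i} for the ordering vs = [v_1, ..., v_n] *)
definition prefix_set :: "'a list \<Rightarrow> nat \<Rightarrow> 'a set" where
  "prefix_set vs i = set (take i vs)"

(* Edge set of G_i: edges of G with one end in V_i and the other in V(G) - V_i *)
definition cut_edges :: "'a set \<Rightarrow> 'a set set \<Rightarrow> 'a list \<Rightarrow> nat \<Rightarrow> 'a set set" where
  "cut_edges V E vs i =
     {e \<in> E. \<exists>x y. e = {x, y} \<and> x \<in> prefix_set vs i \<and> y \<in> V - prefix_set vs i}"

definition vertex_cover :: "'a set \<Rightarrow> 'a set set \<Rightarrow> 'a set \<Rightarrow> bool" where
  "vertex_cover V F C \<longleftrightarrow> C \<subseteq> V \<and> (\<forall>e\<in>F. e \<inter> C \<noteq> {})"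

definition min_vertex_cover :: "'a set \<Rightarrow> 'a set set \<Rightarrow> 'a set \<Rightarrow> bool" where
  "min_vertex_cover V F C \<longleftrightarrow> vertex_cover V F C \<and>
     (\<forall>C'. vertex_cover V F C' \<longrightarrow> card C \<le> card C')"

end

theory Submission
  imports Defs
begin

lemma card_ind: "finite V \<Longrightarrow> A \<subseteq> V \<Longrightarrow> card A = (\<Sum>x\<in>V. if x \<in> A then 1 else (0::nat))"
proof -
  assume f: "finite V" and s: "A \<subseteq> V"
  have "(\<Sum>x\<in>V. if x \<in> A then 1 else (0::nat)) = (\<Sum>x\<in>V \<inter> A. 1)"
    using f by (simp add: sum.If_cases)
  also have "\<dots> = card A" using s by (simp add: Int_absorb1)
  finally show ?thesis by simp
qed

lemma exists_min:
  assumes "vertex_cover V F V"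
  shows "\<exists>C. min_vertex_cover V F C"
proof -
  define k where "k = (LEAST k. \<exists>C. vertex_cover V F C \<and> card C = k)"
  have "\<exists>C. vertex_cover V F C \<and> card C = k"
    unfolding k_def by (rule LeastI[of _ "card V"]) (use assms in blast)
  then obtain C where C: "vertex_cover V F C" "card C = k" by blast
  have "\<forall>C'. vertex_cover V F C' \<longrightarrow> card C \<le> card C'"
    using C(2) unfolding k_def by (auto intro: Least_le)
  with C show ?thesis unfolding min_vertex_cover_def by blast
qed

lemma V_cover:
  assumes "set vs = V"
  shows "vertex_cover V (cut_edges V E vs i) V"
  unfolding vertex_cover_def cut_edges_def prefix_set_def using assms
  by (auto dest: in_set_takeD)

lemma step:
  assumes sg: "simple_graph V E" and d: "distinct vs" and sv: "set vs = V"
    and il: "i < length vs"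
    and C: "min_vertex_cover V (cut_edges V E vs i) C"
  shows "\<exists>D. min_vertex_cover V (cut_edges V E vs (Suc i)) D \<and>
             C \<inter> (V - prefix_set vs (Suc i)) \<subseteq> D"
proof -
  have fV: "finite V" using sg unfolding simple_graph_def by blast
  define v where "v = vs ! i"
  define U where "U = prefix_set vs i"
  have PS: "prefix_set vs (Suc i) = insert v U"
    unfolding prefix_set_def U_def v_def using il by (simp add: take_Suc_conv_app_nth)
  have vU: "v \<notin> U" unfolding U_def prefix_set_def v_def using d il
    by (auto simp: in_set_conv_nth nth_eq_iff_index_eq)
  have vV: "v \<in> V" using il sv v_def by auto
  have UV: "U \<subseteq> V" unfolding U_def prefix_set_def using sv by (auto dest: in_set_takeD)
  define W where "W = V - prefix_set vs (Suc i)"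
  have Wc: "x \<in> W \<longleftrightarrow> x \<in> V \<and> x \<notin> U \<and> x \<noteq> v" for x unfolding W_def PS by auto
  have CV: "C \<subseteq> V" and Ccov: "\<forall>e\<in>cut_edges V E vs i. e \<inter> C \<noteq> {}"
    and Cmin: "\<forall>C'. vertex_cover V (cut_edges V E vs i) C' \<longrightarrow> card C \<le> card C'"
    using C unfolding min_vertex_cover_def vertex_cover_def by auto
  obtain D0 where D0: "min_vertex_cover V (cut_edges V E vs (Suc i)) D0"
    using exists_min[OF V_cover[OF sv]] by blast
  have D0V: "D0 \<subseteq> V" and D0cov: "\<forall>e\<in>cut_edges V E vs (Suc i). e \<inter> D0 \<noteq> {}"
    and D0min: "\<forall>C'. vertex_cover V (cut_edges V E vs (Suc i)) C' \<longrightarrow> card D0 \<le> card C'"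
    using D0 unfolding min_vertex_cover_def vertex_cover_def by auto
  define D where "D = {x \<in> V. (x \<in> W \<and> (x \<in> C \<or> x \<in> D0)) \<or> (x \<in> U \<and> x \<in> C \<and> x \<in> D0) \<or> (x = v \<and> x \<in> D0)}"
  define F where "F = {x \<in> V. (x \<in> W \<and> x \<in> C \<and> x \<in> D0) \<or> (x \<in> U \<and> (x \<in> C \<or> x \<in> D0)) \<or> (x = v \<and> x \<in> C)}"
  have cutS: "e \<in> cut_edges V E vs (Suc i) \<longleftrightarrow> e \<in> E \<and> (\<exists>x y. e = {x, y} \<and> x \<in> insert v U \<and> y \<in> W)" for e
    unfolding cut_edges_def W_def PS by auto
  have cutI: "e \<in> cut_edges V E vs i \<longleftrightarrow> e \<in> E \<and> (\<exists>x y. e = {x, y} \<and> x \<in> U \<and> y \<in> V - U)" for e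
    unfolding cut_edges_def U_def by auto
  have Dcov: "vertex_cover V (cut_edges V E vs (Suc i)) D"
    unfolding vertex_cover_def
  proof (intro conjI ballI)
    show "D \<subseteq> V" unfolding D_def by auto
  next
    fix e assume e: "e \<in> cut_edges V E vs (Suc i)"
    then obtain x y where xy: "e \<in> E" "e = {x, y}" "x \<in> insert v U" "y \<in> W" using cutS by blast
    have "e \<inter> D0 \<noteq> {}" using D0cov e by blast
    then have d0: "x \<in> D0 \<or> y \<in> D0" using xy(2) by blast
    show "e \<inter> D \<noteq> {}"
    proof (cases "x = v")
      case True
      have yV: "y \<in> V" using Wc[of y] xy(4) by blast
      have "x \<in> D \<or> y \<in> D" using d0 True vV yV xy(4) unfolding D_def by blast
      then show ?thesis using xy(2) by blast
    next
      case False
      then have xU: "x \<in> U" using xy by auto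
      have yVU: "y \<in> V - U" using Wc[of y] xy(4) by blast
      have "e \<in> cut_edges V E vs i" unfolding cutI
        by (rule conjI[OF xy(1)], rule exI[of _ x], rule exI[of _ y]) (insert yVU, simp add: xy(2) xU)
      then have "e \<inter> C \<noteq> {}" using Ccov by blast
      then have "x \<in> C \<or> y \<in> C" using xy(2) by blast
      then have "x \<in> D \<or> y \<in> D" using d0 xU UV yVU xy(4) unfolding D_def by blast
      then show ?thesis using xy(2) by blast
    qed
  qed
  have Fcov: "vertex_cover V (cut_edges V E vs i) F"
    unfolding vertex_cover_def
  proof (intro conjI ballI)
    show "F \<subseteq> V" unfolding F_def by auto
  next
    fix e assume e: "e \<in> cut_edges V E vs i"
    then obtain x y where xy: "e \<in> E" "e = {x, y}" "x \<in> U" "y \<in> V - U" using cutI by blast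
    have "e \<inter> C \<noteq> {}" using Ccov e by blast
    then have c: "x \<in> C \<or> y \<in> C" using xy(2) by blast
    show "e \<inter> F \<noteq> {}"
    proof (cases "y = v")
      case True
      have "x \<in> F \<or> y \<in> F" using c True xy(3) vV UV unfolding F_def by blast
      then show ?thesis using xy(2) by blast
    next
      case False
      then have yW: "y \<in> W" using xy Wc[of y] by auto
      have "e \<in> cut_edges V E vs (Suc i)" unfolding cutS
        by (rule conjI[OF xy(1)], rule exI[of _ x], rule exI[of _ y]) (insert yW xy(3), simp add: xy(2))
      then have "e \<inter> D0 \<noteq> {}" using D0cov by blast
      then have "x \<in> D0 \<or> y \<in> D0" using xy(2) by blast
      then have "x \<in> F \<or> y \<in> F" using c xy(3) yW UV Wc[of y] unfolding F_def by blast
      then show ?thesis using xy(2) by blast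
    qed
  qed
  have pw: "(if x \<in> D then 1 else 0) + (if x \<in> F then 1 else 0) =
            (if x \<in> C then 1 else 0) + (if x \<in> D0 then (1::nat) else 0)" if "x \<in> V" for x
    using that Wc[of x] vU unfolding D_def F_def by auto
  have "card D + card F = card C + card D0"
    using card_ind[OF fV, of D] card_ind[OF fV, of F] card_ind[OF fV CV] card_ind[OF fV D0V]
      Dcov Fcov pw unfolding vertex_cover_def
    by (simp add: sum.distrib[symmetric] cong: sum.cong)
  moreover have "card D0 \<le> card D" using D0min Dcov by blast
  moreover have "card C \<le> card F" using Cmin Fcov by blast
  ultimately have "card D \<le> card D0" by linarith
  then have "min_vertex_cover V (cut_edges V E vs (Suc i)) D"
    using Dcov D0min unfolding min_vertex_cover_def by (meson le_trans)
  moreover have "C \<inter> (V - prefix_set vs (Suc i)) \<subseteq> D" unfolding D_def W_def by auto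
  ultimately show ?thesis by blast
qed


theorem lemma4:
  fixes V :: "'a set" and E :: "'a set set" and vs :: "'a list" and n :: nat
  assumes "simple_graph V E"
    and "card V = n"
    and "distinct vs" and "set vs = V"
  shows "\<exists>VC :: nat \<Rightarrow> 'a set.
           (\<forall>i. 1 \<le> i \<and> i < n \<longrightarrow> min_vertex_cover V (cut_edges V E vs i) (VC i)) \<and>
           (\<forall>i. 1 \<le> i \<and> i < n - 1 \<longrightarrow>
              VC i \<inter> (V - prefix_set vs (Suc i)) \<subseteq> VC (Suc i))"
proof -
  have len: "length vs = n" using assms distinct_card by fastforce
  define M where "M = (\<lambda>i C. min_vertex_cover V (cut_edges V E vs i) C)"
  define VC where "VC = rec_nat (SOME C. M 0 C)
      (\<lambda>i C. SOME D. M (Suc i) D \<and> C \<inter> (V - prefix_set vs (Suc i)) \<subseteq> D)"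
  have VC0: "VC 0 = (SOME C. M 0 C)" unfolding VC_def by simp
  have VCS: "VC (Suc i) = (SOME D. M (Suc i) D \<and> VC i \<inter> (V - prefix_set vs (Suc i)) \<subseteq> D)" for i
    unfolding VC_def by simp
  have Mi: "M i (VC i)" if "i < n" for i
    using that
  proof (induction i)
    case 0
    show ?case unfolding VC0 using exists_min[OF V_cover[OF assms(4)]] M_def by (metis someI_ex)
  next
    case (Suc i)
    have "M i (VC i)" using Suc by simp
    then have "\<exists>D. M (Suc i) D \<and> VC i \<inter> (V - prefix_set vs (Suc i)) \<subseteq> D"
      using step[OF assms(1,3,4)] Suc.prems len unfolding M_def by simp
    then show ?case unfolding VCS by (rule someI_ex[THEN conjunct1])
  qed
  have inc: "VC i \<inter> (V - prefix_set vs (Suc i)) \<subseteq> VC (Suc i)" if "Suc i < n" for i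
  proof -
    have "M i (VC i)" using Mi that by simp
    then have "\<exists>D. M (Suc i) D \<and> VC i \<inter> (V - prefix_set vs (Suc i)) \<subseteq> D"
      using step[OF assms(1,3,4)] that len unfolding M_def by simp
    then show ?thesis unfolding VCS by (rule someI_ex[THEN conjunct2])
  qed
  show ?thesis
  proof (rule exI[of _ VC], intro conjI allI impI)
    fix i assume "1 \<le> i \<and> i < n" then show "min_vertex_cover V (cut_edges V E vs i) (VC i)"
      using Mi unfolding M_def by blast
  next
    fix i assume "1 \<le> i \<and> i < n - 1" then show "VC i \<inter> (V - prefix_set vs (Suc i)) \<subseteq> VC (Suc i)"
      using inc[of i] by linarith
  qed
qed

end
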